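(* Let $x_0<x_1<\cdots<x_6$ be real numbers and write $d_{i,j}=x_j-x_i$ for $i<j$. If $d_{0,1}d_{2,3}d_{3,4}d_{5,6}>d_{1,2}d_{4,5}d_{0,3}d_{3,6}$, then at least one of the following holds: (1) $d_{1,2}<\min\{d_{0,1},d_{2,3}\}$; (2) $d_{4,5}<\min\{d_{3,4},d_{5,6}\}$. *)

theory Defs
  imports Main Complex_Main
begin

end

theory Submission
  imports Defs
begin

lemma aux:
  fixes a b c :: real
  assumes "a > 0" "b > 0" "c > 0" "\<not> b < min a c"
  shows "a * c \<le> b * (a + b + c)"
proof (cases "a \<le> b")
  case True
  then have "a * c \<le> b * c" using assms by (simp add: mult_right_mono)
  also have "\<dots> \<le> b * (a + b + c)" using assms by (simp add: mult_left_mono)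
  finally show ?thesis .
next
  case False
  then have "c \<le> b" using assms by auto
  then have "a * c \<le> a * b" using assms by (simp add: mult_left_mono)
  also have "\<dots> \<le> b * (a + b + c)" using assms by (simp add: algebra_simps)
  finally show ?thesis .
qed

theorem lemma3:
  fixes x0 x1 x2 x3 x4 x5 x6 :: real
  assumes "x0 < x1" "x1 < x2" "x2 < x3" "x3 < x4" "x4 < x5" "x5 < x6"
    and "(x1 - x0) * (x3 - x2) * (x4 - x3) * (x6 - x5)
         > (x2 - x1) * (x5 - x4) * (x3 - x0) * (x6 - x3)"
  shows "x2 - x1 < min (x1 - x0) (x3 - x2) \<or> x5 - x4 < min (x4 - x3) (x6 - x5)"
proof (rule ccontr)
  assume n: "\<not> ?thesis"
  have n1: "\<not> x2 - x1 < min (x1 - x0) (x3 - x2)" using n by blast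
  have n2: "\<not> x5 - x4 < min (x4 - x3) (x6 - x5)" using n by blast
  have h1: "(x1 - x0) * (x3 - x2) \<le> (x2 - x1) * ((x1 - x0) + (x2 - x1) + (x3 - x2))"
    using aux[OF _ _ _ n1] assms by simp
  have h2: "(x4 - x3) * (x6 - x5) \<le> (x5 - x4) * ((x4 - x3) + (x5 - x4) + (x6 - x5))"
    using aux[OF _ _ _ n2] assms by simp
  have "(x1 - x0) * (x3 - x2) * ((x4 - x3) * (x6 - x5))
     \<le> ((x2 - x1) * ((x1 - x0) + (x2 - x1) + (x3 - x2))) * ((x5 - x4) * ((x4 - x3) + (x5 - x4) + (x6 - x5)))"
    proof (rule mult_mono[OF h1 h2])
    show "0 \<le> (x2 - x1) * ((x1 - x0) + (x2 - x1) + (x3 - x2))" using assms by simp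
    show "0 \<le> (x4 - x3) * (x6 - x5)" using assms by simp
  qed
  then show False using assms(7) by (simp add: algebra_simps)
qed

end
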